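(* Assume that $\lambda^*<+\infty$ and that there exists a simple solution $(u^*,\psi^* )\in S\times\Sigma$ of the maximin problem $\lambda^*=\sup_{u\in S}\inf_{\psi\in\Sigma}\Lambda(u,\psi)$. Then $(u^*,\lambda^* )$ is a maximal turning point of $F(u,\lambda)=0$ in $S$, and $\operatorname{Ker}(D_uF^T(u^*,\lambda^* ))=\operatorname{span}\{\psi^*\}$.
   Context: Let $T,G:\mathbb{R}^n\to\mathbb{R}^n$ be continuously differentiable and $F(u,\lambda)=T(u)-\lambda G(u)$ for $(u,\lambda)\in\mathbb{R}^n\times\mathbb{R}$; $D_uF(u,\lambda)$ is the Jacobian of $F$ with respect to $u$ and $D_uF^T(u,\lambda)$ its transpose. $\langle\cdot,\cdot\rangle$ is the Euclidean inner product. Let $\Sigma=\{\psi\in\mathbb{R}^n\setminus\{0\}:\psi_i\ge 0,\ i=1,\dots,n\}$. Standing assumption: $S\subset\mathbb{R}^n$ is open and $\langle G(u),\psi\rangle>0$ for all $u\in S$, $\psi\in\Sigma$. Put $\Lambda(u,\psi)=\langle T(u),\psi\rangle/\langle G(u),\psi\rangle$ for $u\in S,\psi\in\Sigma$, and $\lambda^*=\sup_{u\in S}\inf_{\psi\in\Sigma}\Lambda(u,\psi)$. A point $(u^*,\psi^* )\in S\times\Sigma$ is a stationary point of $\Lambda$ if $D_\psi\Lambda(u^*,\psi^* )=0$ and $D_u\Lambda(u^*,\psi^* )=0$; it is a solution of the maximin problem if it is a stationary point and $\Lambda(u^*,\psi^* )=\lambda^*$; it is a simple solution if moreover $\dim\operatorname{Ker}D_{u\psi}\Lambda(u^*,\psi^*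 )=1$, where $D_{u\psi}\Lambda$ is the $n\times n$ matrix of mixed second partial derivatives $\partial^2\Lambda/\partial u_j\partial\psi_i$. A point $(u^*,\lambda^* )$ is a turning point of $F=0$ if there are $a>0$ and a $C^1$ map $(-a,a)\ni s\mapsto(u(s),\lambda(s))\in\mathbb{R}^n\times\mathbb{R}$ such that (1) $F(u(s),\lambda(s))=0$ for all $s\in(-a,a)$ and $(u(0),\lambda(0))=(u^*,\lambda^* )$; (2) $\frac{d}{ds}\lambda(0)=0$; (3) either $\lambda(s)\le\lambda^*$ for all $s\in(-a,a)$ or $\lambda(s)\ge\lambda^*$ for all $s\in(-a,a)$. A turning point $(u^*,\lambda^* )$ is a maximal turning point in $S$ if $u^*\in S$ and $\lambda^*\ge\lambda_0$ for every turning point $(u_0,\lambda_0)$ with $u_0\in S$. *)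

theory Defs
  imports "HOL-Analysis.Analysis"
begin

definition C1_map :: "(real^'n \<Rightarrow> real^'n) \<Rightarrow> bool" where
  "C1_map f \<longleftrightarrow> (\<forall>x. f differentiable (at x)) \<and> continuous_on UNIV (\<lambda>x. jacobian f (at x))"

definition Fmap :: "(real^'n \<Rightarrow> real^'n) \<Rightarrow> (real^'n \<Rightarrow> real^'n) \<Rightarrow> real^'n \<Rightarrow> real \<Rightarrow> real^'n" where
  "Fmap T G u lam = T u - lam *\<^sub>R G u"

definition Sigma_cone :: "(real^'n) set" where
  "Sigma_cone = {psi. psi \<noteq> 0 \<and> (\<forall>i. 0 \<le> psi $ i)}"

definition Lam :: "(real^'n \<Rightarrow> real^'n) \<Rightarrow> (real^'n \<Rightarrow> real^'n) \<Rightarrow> real^'n \<Rightarrow> real^'n \<Rightarrow> real" where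
  "Lam T G u psi = (T u \<bullet> psi) / (G u \<bullet> psi)"

definition lambda_star :: "(real^'n \<Rightarrow> real^'n) \<Rightarrow> (real^'n \<Rightarrow> real^'n) \<Rightarrow> (real^'n) set \<Rightarrow> ereal" where
  "lambda_star T G S = (SUP u\<in>S. INF psi\<in>Sigma_cone. ereal (Lam T G u psi))"

definition stationary_point :: "(real^'n \<Rightarrow> real^'n) \<Rightarrow> (real^'n \<Rightarrow> real^'n) \<Rightarrow> (real^'n) set \<Rightarrow> real^'n \<Rightarrow> real^'n \<Rightarrow> bool" where
  "stationary_point T G S u psi \<longleftrightarrow> u \<in> S \<and> psi \<in> Sigma_cone \<and>
     ((\<lambda>p. Lam T G u p) has_derivative (\<lambda>h. 0)) (at psi) \<and>
     ((\<lambda>v. Lam T G v psi) has_derivative (\<lambda>h. 0)) (at u)"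

definition maximin_solution :: "(real^'n \<Rightarrow> real^'n) \<Rightarrow> (real^'n \<Rightarrow> real^'n) \<Rightarrow> (real^'n) set \<Rightarrow> real^'n \<Rightarrow> real^'n \<Rightarrow> bool" where
  "maximin_solution T G S u psi \<longleftrightarrow> stationary_point T G S u psi \<and> ereal (Lam T G u psi) = lambda_star T G S"

definition pderiv_at :: "(real^'n \<Rightarrow> real) \<Rightarrow> real^'n \<Rightarrow> 'n \<Rightarrow> real" where
  "pderiv_at f x j = deriv (\<lambda>t. f (x + t *\<^sub>R axis j 1)) 0"

text \<open>Matrix of mixed second partial derivatives, entry (i,j) = d^2 Lambda / du_j dpsi_i.\<close>
definition D_upsi_Lam :: "(real^'n \<Rightarrow> real^'n) \<Rightarrow> (real^'n \<Rightarrow> real^'n) \<Rightarrow> real^'n \<Rightarrow> real^'n \<Rightarrow> real^'n^'n" where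
  "D_upsi_Lam T G u psi = (\<chi> i j. pderiv_at (\<lambda>v. pderiv_at (\<lambda>p. Lam T G v p) psi i) u j)"

definition simple_solution :: "(real^'n \<Rightarrow> real^'n) \<Rightarrow> (real^'n \<Rightarrow> real^'n) \<Rightarrow> (real^'n) set \<Rightarrow> real^'n \<Rightarrow> real^'n \<Rightarrow> bool" where
  "simple_solution T G S u psi \<longleftrightarrow> maximin_solution T G S u psi \<and>
     dim {x. D_upsi_Lam T G u psi *v x = 0} = 1"

definition turning_point :: "(real^'n \<Rightarrow> real^'n) \<Rightarrow> (real^'n \<Rightarrow> real^'n) \<Rightarrow> real^'n \<Rightarrow> real \<Rightarrow> bool" where
  "turning_point T G u0 lam0 \<longleftrightarrow>
     (\<exists>a>0. \<exists>us :: real \<Rightarrow> real^'n. \<exists>ls :: real \<Rightarrow> real.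
        (\<lambda>s. (us s, ls s)) C1_differentiable_on {-a<..<a} \<and>
        (\<forall>s\<in>{-a<..<a}. Fmap T G (us s) (ls s) = 0) \<and> us 0 = u0 \<and> ls 0 = lam0 \<and>
        (ls has_real_derivative 0) (at 0) \<and>
        ((\<forall>s\<in>{-a<..<a}. ls s \<le> lam0) \<or> (\<forall>s\<in>{-a<..<a}. ls s \<ge> lam0)))"

definition maximal_turning_point :: "(real^'n \<Rightarrow> real^'n) \<Rightarrow> (real^'n \<Rightarrow> real^'n) \<Rightarrow> (real^'n) set \<Rightarrow> real^'n \<Rightarrow> real \<Rightarrow> bool" where
  "maximal_turning_point T G S u lam \<longleftrightarrow> turning_point T G u lam \<and> u \<in> S \<and>
     (\<forall>u0 lam0. turning_point T G u0 lam0 \<and> u0 \<in> S \<longrightarrow> lam0 \<le> lam)"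

end

theory Submission
  imports Defs
begin

lemma inner_mv: "(A *v x) \<bullet> (w::real^'n) = x \<bullet> (transpose A *v w)"
proof -
  have "(A *v x) \<bullet> w = w \<bullet> (A *v x)" by (rule inner_commute)
  also have "\<dots> = (w v* A) \<bullet> x" by (rule dot_lmul_matrix[symmetric])
  also have "\<dots> = x \<bullet> (transpose A *v w)" by (simp add: inner_commute)
  finally show ?thesis .
qed

lemma ker_dim:
  fixes A :: "real^'n^'m"
  shows "dim {x. A *v x = 0} + rank A = CARD('n)"
proof -
  have eq: "{x. A *v x = 0} = {y \<in> UNIV. \<forall>z \<in> range (\<lambda>w. transpose A *v w). orthogonal z y}"
  proof (intro set_eqI iffI)
    fix x assume "x \<in> {x. A *v x = 0}"
    then have "A *v x = 0" by simp
    then have "\<forall>w. orthogonal (transpose A *v w) x"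
      unfolding orthogonal_def using inner_mv[of A x] by (simp add: inner_commute)
    then show "x \<in> {y \<in> UNIV. \<forall>z \<in> range (\<lambda>w. transpose A *v w). orthogonal z y}" by auto
  next
    fix x assume "x \<in> {y \<in> UNIV. \<forall>z\<in>range ((*v) (transpose A)). orthogonal z y}"
    then have "orthogonal (transpose A *v (A *v x)) x" by blast
    then have "(A *v x) \<bullet> (A *v x) = 0"
      unfolding orthogonal_def using inner_mv[of A x "A *v x"] by (simp add: inner_commute)
    then show "x \<in> {x. A *v x = 0}" by simp
  qed
  have "dim {y \<in> UNIV. \<forall>z \<in> range (\<lambda>w. transpose A *v w). orthogonal z y} + dim (range (\<lambda>w. transpose A *v w)) = dim (UNIV :: (real^'n) set)"
    by (rule dim_subspace_orthogonal_to_vectors[OF linear_subspace_image[OF matrix_vector_mul_linear[of "transpose A"] subspace_UNIV] subspace_UNIV subset_UNIV])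
  moreover have "dim (range (\<lambda>w. transpose A *v w)) = rank A"
    using rank_dim_range[of "transpose A"] rank_transpose[of A] by simp
  moreover have "dim (UNIV :: (real^'n) set) = CARD('n)" by simp
  ultimately show ?thesis using eq by simp
qed

lemma ker_transpose:
  fixes M :: "real^'n^'n" and psi :: "real^'n"
  assumes "dim {x. M *v x = 0} = 1" "transpose M *v psi = 0" "psi \<noteq> 0"
  shows "{p. transpose M *v p = 0} = span {psi}"
proof -
  have k1: "dim {x. M *v x = 0} + rank M = CARD('n)" by (rule ker_dim)
  have k2: "dim {x. transpose M *v x = 0} + rank (transpose M) = CARD('n)" by (rule ker_dim)
  have d1: "dim {x. transpose M *v x = 0} = 1"
    using k1 k2 assms(1) rank_transpose[of M] by linarith
  have sub: "subspace {p. transpose M *v p = 0}"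
    using linear_subspace_kernel[OF matrix_vector_mul_linear[of "transpose M"]] by simp
  have s1: "{psi} \<subseteq> {p. transpose M *v p = 0}" using assms(2) by simp
  have s2: "dim {p. transpose M *v p = 0} \<le> dim {psi}" using d1 assms(3) by simp
  from s1 s2 have "span {psi} = span {p. transpose M *v p = 0}" by (rule dim_eq_span)
  also have "\<dots> = {p. transpose M *v p = 0}" using sub by (rule span_eq_iff[THEN iffD2])
  finally show ?thesis by simp
qed

lemma dir_deriv_real:
  fixes f :: "real^'n \<Rightarrow> real"
  assumes "(f has_derivative f') (at x)"
  shows "((\<lambda>t. f (x + t *\<^sub>R h)) has_real_derivative f' h) (at 0)"
proof -
  have l: "linear f'" using assms has_derivative_linear by blast
  have "((\<lambda>t. x + t *\<^sub>R h) has_derivative (\<lambda>t. t *\<^sub>R h)) (at 0)"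
    by (auto intro!: derivative_eq_intros)
  from has_derivative_compose[OF this, of f f'] assms
  have "((\<lambda>t. f (x + t *\<^sub>R h)) has_derivative (\<lambda>t. f' (t *\<^sub>R h))) (at 0)" by (simp add: o_def)
  moreover have "(\<lambda>t. f' (t *\<^sub>R h)) = (*) (f' h)"
    using linear_scale[OF l] by (auto simp: mult.commute)
  ultimately show ?thesis
    unfolding has_field_derivative_def by simp
qed

lemma dir_deriv_vec:
  fixes f :: "real^'n \<Rightarrow> real^'n"
  assumes "(f has_derivative f') (at x)"
  shows "((\<lambda>t. f (x + t *\<^sub>R h) \<bullet> c) has_real_derivative (f' h \<bullet> c)) (at 0)"
proof -
  have "((\<lambda>y. f y \<bullet> c) has_derivative (\<lambda>k. f' k \<bullet> c)) (at x)"
    using assms by (auto intro!: derivative_eq_intros)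
  from dir_deriv_real[OF this] show ?thesis .
qed

lemma C1_deriv:
  assumes "C1_map T"
  shows "(T has_derivative (\<lambda>h. jacobian T (at x) *v h)) (at x)"
  using assms unfolding C1_map_def by (simp add: jacobian_works)


lemma stat_psi:
  fixes T G :: "real^'n \<Rightarrow> real^'n"
  assumes "((\<lambda>p. Lam T G u p) has_derivative (\<lambda>h. 0)) (at psi)" "G u \<bullet> psi > 0"
  shows "T u = Lam T G u psi *\<^sub>R G u"
proof -
  define g where "g = G u \<bullet> psi"
  define t where "t = T u \<bullet> psi"
  define L where "L = Lam T G u psi"
  have Lg: "t = L * g" using assms(2) by (simp add: L_def Lam_def t_def g_def)
  define h where "h = T u - L *\<^sub>R G u"
  have d0: "((\<lambda>s. Lam T G u (psi + s *\<^sub>R h)) has_real_derivative 0) (at 0)"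
    using dir_deriv_real[OF assms(1)] by simp
  have eq: "(\<lambda>s. Lam T G u (psi + s *\<^sub>R h)) = (\<lambda>s. (t + s * (T u \<bullet> h)) / (g + s * (G u \<bullet> h)))"
    by (simp add: Lam_def t_def g_def inner_add_right)
  have "((\<lambda>s. (t + s * (T u \<bullet> h)) / (g + s * (G u \<bullet> h))) has_real_derivative
      (((T u \<bullet> h) * (g + 0 * (G u \<bullet> h)) - (t + 0 * (T u \<bullet> h)) * (G u \<bullet> h)) / ((g + 0 * (G u \<bullet> h)) * (g + 0 * (G u \<bullet> h))))) (at 0)"
    using assms(2) unfolding g_def
    by (intro DERIV_divide derivative_eq_intros) auto
  with d0 eq have "((T u \<bullet> h) * g - t * (G u \<bullet> h)) / (g * g) = 0"
    using DERIV_unique by fastforce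
  then have "(T u \<bullet> h) * g - t * (G u \<bullet> h) = 0" using assms(2) g_def by simp
  then have "g * (h \<bullet> h) = 0" unfolding Lg h_def by (simp add: algebra_simps inner_diff_left)
  then have "h = 0" using assms(2) g_def by simp
  then show ?thesis by (simp add: h_def L_def)
qed

lemma stat_u:
  fixes T G :: "real^'n \<Rightarrow> real^'n"
  assumes "C1_map T" "C1_map G"
    "((\<lambda>v. Lam T G v psi) has_derivative (\<lambda>h. 0)) (at u)" "G u \<bullet> psi > 0"
  shows "((jacobian T (at u) - Lam T G u psi *\<^sub>R jacobian G (at u)) *v h) \<bullet> psi = 0"
proof -
  define g where "g = G u \<bullet> psi"
  define t where "t = T u \<bullet> psi"
  define L where "L = Lam T G u psi"
  have Lg: "t = L * g" using assms(4) by (simp add: L_def Lam_def t_def g_def)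
  have d0: "((\<lambda>s. Lam T G (u + s *\<^sub>R h) psi) has_real_derivative 0) (at 0)"
    using dir_deriv_real[OF assms(3)] by simp
  have eq: "(\<lambda>s. Lam T G (u + s *\<^sub>R h) psi) = (\<lambda>s. (T (u + s *\<^sub>R h) \<bullet> psi) / (G (u + s *\<^sub>R h) \<bullet> psi))"
    by (simp add: Lam_def)
  have "((\<lambda>s. (T (u + s *\<^sub>R h) \<bullet> psi) / (G (u + s *\<^sub>R h) \<bullet> psi)) has_real_derivative
      (((jacobian T (at u) *v h) \<bullet> psi) * (G (u + 0 *\<^sub>R h) \<bullet> psi) - (T (u + 0 *\<^sub>R h) \<bullet> psi) * ((jacobian G (at u) *v h) \<bullet> psi)) / ((G (u + 0 *\<^sub>R h) \<bullet> psi) * (G (u + 0 *\<^sub>R h) \<bullet> psi))) (at 0)"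
    using assms(4)
    by (intro DERIV_divide dir_deriv_vec C1_deriv assms(1,2)) auto
  with d0 eq have "(((jacobian T (at u) *v h) \<bullet> psi) * g - t * ((jacobian G (at u) *v h) \<bullet> psi)) / (g * g) = 0"
    using DERIV_unique unfolding g_def t_def by fastforce
  then have "((jacobian T (at u) *v h) \<bullet> psi) * g - t * ((jacobian G (at u) *v h) \<bullet> psi) = 0"
    using assms(4) g_def by simp
  then have "g * (((jacobian T (at u) *v h) \<bullet> psi) - L * ((jacobian G (at u) *v h) \<bullet> psi)) = 0"
    unfolding Lg by (simp add: algebra_simps)
  then have "((jacobian T (at u) *v h) \<bullet> psi) - L * ((jacobian G (at u) *v h) \<bullet> psi) = 0"
    using assms(4) g_def by simp
  then show ?thesis
    by (simp add: L_def matrix_vector_mult_diff_rdistrib inner_diff_left scaleR_matrix_vector_assoc[symmetric])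
qed


lemma inner_pderiv:
  fixes T G :: "real^'n \<Rightarrow> real^'n"
  assumes "G v \<bullet> psi \<noteq> 0"
  shows "pderiv_at (\<lambda>p. Lam T G v p) psi i =
    (T v $ i * (G v \<bullet> psi) - (T v \<bullet> psi) * G v $ i) / ((G v \<bullet> psi) * (G v \<bullet> psi))"
proof -
  have eq: "(\<lambda>t. Lam T G v (psi + t *\<^sub>R axis i 1)) = (\<lambda>t. (T v \<bullet> psi + t * T v $ i) / (G v \<bullet> psi + t * G v $ i))"
    by (simp add: Lam_def inner_add_right inner_axis)
  have "((\<lambda>t. (T v \<bullet> psi + t * T v $ i) / (G v \<bullet> psi + t * G v $ i)) has_real_derivative
     ((T v $ i) * (G v \<bullet> psi + 0 * G v $ i) - (T v \<bullet> psi + 0 * T v $ i) * (G v $ i)) / ((G v \<bullet> psi + 0 * G v $ i) * (G v \<bullet> psi + 0 * G v $ i))) (at 0)"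
    using assms by (intro DERIV_divide derivative_eq_intros) auto
  then show ?thesis unfolding pderiv_at_def eq by (simp add: DERIV_imp_deriv)
qed

lemma C1_cont: "C1_map T \<Longrightarrow> continuous_on UNIV T"
  unfolding C1_map_def by (meson differentiable_imp_continuous_within continuous_at_imp_continuous_on)

lemma mixed:
  fixes T G :: "real^'n \<Rightarrow> real^'n"
  assumes T: "C1_map T" and G: "C1_map G" and g: "G u \<bullet> psi > 0" and TL: "T u = L *\<^sub>R G u"
    and K: "\<And>h. ((jacobian T (at u) - L *\<^sub>R jacobian G (at u)) *v h) \<bullet> psi = 0"
  shows "D_upsi_Lam T G u psi = (1 / (G u \<bullet> psi)) *\<^sub>R (jacobian T (at u) - L *\<^sub>R jacobian G (at u))"
proof -
  define M where "M = jacobian T (at u) - L *\<^sub>R jacobian G (at u)"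
  have entry: "pderiv_at (\<lambda>v. pderiv_at (\<lambda>p. Lam T G v p) psi i) u j = M $ i $ j / (G u \<bullet> psi)" for i j
  proof -
    define e where "e = axis j (1::real)"
    define ei where "ei = axis i (1::real)"
    define q where "q v = (T v \<bullet> ei * (G v \<bullet> psi) - (T v \<bullet> psi) * (G v \<bullet> ei)) / ((G v \<bullet> psi) * (G v \<bullet> psi))" for v
    define W where "W = {t::real. 0 < G (u + t *\<^sub>R e) \<bullet> psi}"
    have contG: "continuous_on UNIV G" by (rule C1_cont[OF G])
    have "continuous_on UNIV (\<lambda>t::real. G (u + t *\<^sub>R e) \<bullet> psi)"
      by (intro continuous_intros continuous_on_compose2[OF contG]) auto
    then have oW: "open W" unfolding W_def by (intro open_Collect_less) (auto intro: continuous_intros)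
    have W0: "0 \<in> W" using g by (simp add: W_def)
    have same: "pderiv_at (\<lambda>p. Lam T G (u + t *\<^sub>R e) p) psi i = q (u + t *\<^sub>R e)" if "t \<in> W" for t
      using that inner_pderiv[of G "u + t *\<^sub>R e" psi T i]
      by (simp add: W_def q_def ei_def inner_axis)
    define a' where "a' = (jacobian T (at u) *v e) \<bullet> ei"
    define b' where "b' = (jacobian G (at u) *v e) \<bullet> psi"
    define c' where "c' = (jacobian T (at u) *v e) \<bullet> psi"
    define d' where "d' = (jacobian G (at u) *v e) \<bullet> ei"
    define b where "b = G u \<bullet> psi"
    define d where "d = G u \<bullet> ei"
    have a: "T u \<bullet> ei = L * d" by (simp add: TL d_def)
    have c: "T u \<bullet> psi = L * b" by (simp add: TL b_def)
    have cb: "c' = L * b'" using K[of e]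
      by (simp add: c'_def b'_def matrix_vector_mult_diff_rdistrib inner_diff_left scaleR_matrix_vector_assoc[symmetric])
    have Me: "M $ i $ j = a' - L * d'"
      by (simp add: M_def a'_def d'_def e_def ei_def matrix_vector_mult_basis column_def inner_axis)
    have bpos: "b > 0" using g b_def by simp
    have dA: "((\<lambda>t. T (u + t *\<^sub>R e) \<bullet> ei) has_real_derivative a') (at 0)"
      unfolding a'_def by (intro dir_deriv_vec C1_deriv T)
    have dB: "((\<lambda>t. G (u + t *\<^sub>R e) \<bullet> psi) has_real_derivative b') (at 0)"
      unfolding b'_def by (intro dir_deriv_vec C1_deriv G)
    have dC: "((\<lambda>t. T (u + t *\<^sub>R e) \<bullet> psi) has_real_derivative c') (at 0)"
      unfolding c'_def by (intro dir_deriv_vec C1_deriv T)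
    have dD: "((\<lambda>t. G (u + t *\<^sub>R e) \<bullet> ei) has_real_derivative d') (at 0)"
      unfolding d'_def by (intro dir_deriv_vec C1_deriv G)
    have dq: "((\<lambda>t. q (u + t *\<^sub>R e)) has_real_derivative
      ((a' * (G u \<bullet> psi) + b' * (T u \<bullet> ei) - (c' * (G u \<bullet> ei) + d' * (T u \<bullet> psi))) * ((G u \<bullet> psi) * (G u \<bullet> psi))
       - ((T u \<bullet> ei) * (G u \<bullet> psi) - (T u \<bullet> psi) * (G u \<bullet> ei)) * (b' * (G u \<bullet> psi) + b' * (G u \<bullet> psi)))
      / (((G u \<bullet> psi) * (G u \<bullet> psi)) * ((G u \<bullet> psi) * (G u \<bullet> psi)))) (at 0)"
      unfolding q_def
      using DERIV_divide[OF DERIV_diff[OF DERIV_mult[OF dA dB] DERIV_mult[OF dC dD]] DERIV_mult[OF dB dB]] g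
      by simp
    have "(a' * (G u \<bullet> psi) + b' * (T u \<bullet> ei) - (c' * (G u \<bullet> ei) + d' * (T u \<bullet> psi))) * ((G u \<bullet> psi) * (G u \<bullet> psi))
       - ((T u \<bullet> ei) * (G u \<bullet> psi) - (T u \<bullet> psi) * (G u \<bullet> ei)) * (b' * (G u \<bullet> psi) + b' * (G u \<bullet> psi))
       = (a' - L * d') * (b * b * b)"
      unfolding a c cb b_def[symmetric] d_def[symmetric] by (simp add: algebra_simps)
    then have "((\<lambda>t. q (u + t *\<^sub>R e)) has_real_derivative (a' - L * d') * (b * b * b) / (b * b * (b * b))) (at 0)"
      using dq unfolding b_def by simp
    also have "(a' - L * d') * (b * b * b) / (b * b * (b * b)) = (a' - L * d') / b"
      using bpos by (simp add: field_simps)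
    finally have D: "((\<lambda>t. q (u + t *\<^sub>R e)) has_real_derivative (a' - L * d') / b) (at 0)" .
    have "((\<lambda>t. pderiv_at (\<lambda>p. Lam T G (u + t *\<^sub>R e) p) psi i) has_real_derivative (a' - L * d') / b) (at 0)"
      by (rule has_field_derivative_transform_within_open[OF D oW W0]) (simp add: same)
    then show ?thesis unfolding pderiv_at_def e_def Me b_def by (simp add: DERIV_imp_deriv)
  qed
  show ?thesis
    unfolding D_upsi_Lam_def M_def[symmetric]
    by (simp add: vec_eq_iff entry)
qed


lemma cont_mv:
  fixes F :: "'a::topological_space \<Rightarrow> real^'n^'m"
  assumes "continuous_on S F"
  shows "continuous_on S (\<lambda>x. F x *v c)"
  unfolding matrix_vector_mult_def
  by (intro continuous_intros continuous_on_component assms)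

lemma Phi_setup:
  fixes T G :: "real^'n \<Rightarrow> real^'n" and phi :: "real^'n"
  assumes T: "C1_map T" and G: "C1_map G"
  defines "Phi \<equiv> \<lambda>x::(real^'n) \<times> real. (T (fst x) - snd x *\<^sub>R G (fst x), phi \<bullet> fst x)"
    and "fd \<equiv> \<lambda>(x::(real^'n) \<times> real) (y::(real^'n) \<times> real). (jacobian T (at (fst x)) *v fst y - snd x *\<^sub>R (jacobian G (at (fst x)) *v fst y) - snd y *\<^sub>R G (fst x), phi \<bullet> fst y)"
  shows "\<And>x. bounded_linear (fd x)"
    and "\<And>x. (Phi has_derivative fd x) (at x)"
    and "continuous_on UNIV (\<lambda>x. Blinfun (fd x))"
proof -
  show bl: "bounded_linear (fd x)" for x
    unfolding fd_def
    by (intro bounded_linear_Pair bounded_linear_sub bounded_linear_compose[OF matrix_vector_mul_bounded_linear]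
          bounded_linear_compose[OF bounded_linear_scaleR_right] bounded_linear_compose[OF bounded_linear_inner_right]
          bounded_linear_compose[OF bounded_linear_scaleR_left] bounded_linear_fst bounded_linear_snd)
  show "(Phi has_derivative fd x) (at x)" for x
  proof -
    have dT: "((\<lambda>x. T (fst x)) has_derivative (\<lambda>y. jacobian T (at (fst x)) *v fst y)) (at x)"
      using has_derivative_compose[where x=x and s=UNIV, OF has_derivative_fst[OF has_derivative_ident] C1_deriv[OF T]] by (simp add: o_def)
    have dG: "((\<lambda>x. G (fst x)) has_derivative (\<lambda>y. jacobian G (at (fst x)) *v fst y)) (at x)"
      using has_derivative_compose[where x=x and s=UNIV, OF has_derivative_fst[OF has_derivative_ident] C1_deriv[OF G]] by (simp add: o_def)
    show ?thesis unfolding Phi_def fd_def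
      by (rule derivative_eq_intros dT dG | simp)+ (auto simp: algebra_simps)
  qed
  show "continuous_on UNIV (\<lambda>x. Blinfun (fd x))"
  proof (rule continuous_on_blinfun_componentwise)
    fix b :: "(real^'n) \<times> real"
    have cT: "continuous_on UNIV (\<lambda>x. jacobian T (at x))" using T unfolding C1_map_def by simp
    have cG: "continuous_on UNIV (\<lambda>x. jacobian G (at x))" using G unfolding C1_map_def by simp
    have cG2: "continuous_on UNIV G" by (rule C1_cont[OF G])
    show "continuous_on UNIV (\<lambda>x. blinfun_apply (Blinfun (fd x)) b)"
      unfolding bounded_linear_Blinfun_apply[OF bl] unfolding fd_def
      by (intro continuous_intros cont_mv continuous_on_compose2[OF cT] continuous_on_compose2[OF cG]
          continuous_on_compose2[OF cG2]) auto
  qed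
qed


lemma turning:
  fixes T G :: "real^'n \<Rightarrow> real^'n" and S :: "(real^'n) set"
  assumes T: "C1_map T" and G: "C1_map G" and S: "open S" and uS: "u \<in> S"
    and bnd: "\<And>v l. v \<in> S \<Longrightarrow> T v = l *\<^sub>R G v \<Longrightarrow> l \<le> L"
    and g: "G u \<bullet> psi > 0" and TL: "T u = L *\<^sub>R G u"
    and Kt: "transpose (jacobian T (at u) - L *\<^sub>R jacobian G (at u)) *v psi = 0"
    and kd: "dim {x. (jacobian T (at u) - L *\<^sub>R jacobian G (at u)) *v x = 0} = 1"
  shows "turning_point T G u L"
proof -
  define M where "M = jacobian T (at u) - L *\<^sub>R jacobian G (at u)"
  have Mv: "jacobian T (at u) *v h - L *\<^sub>R (jacobian G (at u) *v h) = M *v h" for h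
    by (simp add: M_def matrix_vector_mult_diff_rdistrib scaleR_matrix_vector_assoc)
  obtain phi where phi: "M *v phi = 0" "phi \<noteq> 0"
  proof -
    have kd': "dim {x. M *v x = 0} = 1" using kd unfolding M_def .
    have "\<not> {x. M *v x = 0} \<subseteq> {0}"
    proof
      assume "{x. M *v x = 0} \<subseteq> {0}"
      then have "dim {x. M *v x = 0} = 0" by (rule dim_eq_0[THEN iffD2])
      then show False using kd' by simp
    qed
    then obtain p where "M *v p = 0" "p \<noteq> 0" by blast
    then show ?thesis by (rule that)
  qed
  have kerphi: "h \<in> span {phi}" if "M *v h = 0" for h
  proof -
    have "span {phi} = span {x. M *v x = 0}"
    proof (rule dim_eq_span)
      show "{phi} \<subseteq> {x. M *v x = 0}" using phi(1) by simp
      have "dim {x. M *v x = 0} = 1" using kd unfolding M_def .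
      then show "dim {x. M *v x = 0} \<le> dim {phi}" using phi(2) by simp
    qed
    moreover have "h \<in> span {x. M *v x = 0}" using that by (intro span_base) simp
    ultimately show ?thesis by simp
  qed
  have kzero: "k = 0" if "M *v h - k *\<^sub>R G u = 0" for h k
  proof -
    have "(M *v h - k *\<^sub>R G u) \<bullet> psi = 0" using that by simp
    then have "(M *v h) \<bullet> psi - k * (G u \<bullet> psi) = 0" by (simp add: inner_diff_left)
    moreover have "(M *v h) \<bullet> psi = 0" using inner_mv[of M h psi] Kt M_def by simp
    ultimately show ?thesis using g by simp
  qed
  define Phi where "Phi = (\<lambda>x::(real^'n) \<times> real. (T (fst x) - snd x *\<^sub>R G (fst x), phi \<bullet> fst x))"
  define fd where "fd = (\<lambda>(x::(real^'n) \<times> real) (y::(real^'n) \<times> real). (jacobian T (at (fst x)) *v fst y - snd x *\<^sub>R (jacobian G (at (fst x)) *v fst y) - snd y *\<^sub>R G (fst x), phi \<bullet> fst y))"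
  note PS = Phi_setup[OF T G, where phi=phi]
  have bl: "bounded_linear (fd x)" for x unfolding fd_def by (rule PS(1))
  have dPhi: "(Phi has_derivative fd x) (at x)" for x unfolding fd_def Phi_def by (rule PS(2))
  have cfd: "continuous_on UNIV (\<lambda>x. Blinfun (fd x))" unfolding fd_def by (rule PS(3))
  define x0 where "x0 = (u, L)"
  have fdx0: "fd x0 y = (M *v fst y - snd y *\<^sub>R G u, phi \<bullet> fst y)" for y
    by (simp add: fd_def x0_def Mv)
  have ker0: "y = 0" if "fd x0 y = 0" for y
  proof -
    have 1: "M *v fst y - snd y *\<^sub>R G u = 0" and 2: "phi \<bullet> fst y = 0" using that fdx0[of y] by (auto simp: prod_eq_iff)
    have k: "snd y = 0" by (rule kzero[OF 1])
    then have "M *v fst y = 0" using 1 by simp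
    then have "fst y \<in> span {phi}" by (rule kerphi)
    then obtain c where c: "fst y = c *\<^sub>R phi" unfolding span_singleton by auto
    then have "c * (phi \<bullet> phi) = 0" using 2 by simp
    then have "c = 0" using phi(2) by simp
    then show ?thesis using c k by (simp add: prod_eq_iff)
  qed
  have lin0: "linear (fd x0)" using bl bounded_linear.linear by blast
  have inj0: "inj (fd x0)"
  proof (rule injI)
    fix a b assume "fd x0 a = fd x0 b"
    then have "fd x0 (a - b) = 0" by (simp add: linear_diff[OF lin0])
    then show "a = b" using ker0[of "a - b"] by simp
  qed
  obtain gi where gi: "linear gi" "gi \<circ> fd x0 = id"
    using linear_injective_left_inverse[OF lin0 inj0] by blast
  have blgi: "bounded_linear gi" using gi(1) by (simp add: linear_conv_bounded_linear)
  define invf where "invf = Blinfun gi"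
  have invf_ap: "blinfun_apply invf (fd x0 y) = y" for y
    using fun_cong[OF gi(2), of y] unfolding invf_def bounded_linear_Blinfun_apply[OF blgi] by simp
  have invf_id: "invf o\<^sub>L Blinfun (fd x0) = id_blinfun"
    by (rule blinfun_eqI) (simp add: bounded_linear_Blinfun_apply[OF bl] invf_ap)
  have derf: "(Phi has_derivative blinfun_apply (Blinfun (fd x))) (at x)" for x
    unfolding bounded_linear_Blinfun_apply[OF bl] by (rule dPhi)
  obtain U' V gg g' where "open U'" "U' \<subseteq> UNIV" "x0 \<in> U'" and oV: "open V" and PV: "Phi x0 \<in> V"
    and hom: "homeomorphism U' V Phi gg"
    and dgg: "\<And>y. y \<in> V \<Longrightarrow> (gg has_derivative (g' y)) (at y)"
    and g'eq: "\<And>y. y \<in> V \<Longrightarrow> g' y = inv (blinfun_apply (Blinfun (fd (gg y))))"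
    and bij: "\<And>y. y \<in> V \<Longrightarrow> bij (blinfun_apply (Blinfun (fd (gg y))))"
    by (rule inverse_function_theorem[OF open_UNIV derf cfd UNIV_I invf_id]) (rule that; assumption)
  have ggPhi: "gg (Phi x) = x" if "x \<in> U'" for x using hom that unfolding homeomorphism_def by auto
  have Phigg: "Phi (gg y) = y" if "y \<in> V" for y using hom that unfolding homeomorphism_def by auto
  have cgg: "continuous_on V gg" using hom unfolding homeomorphism_def by auto
  have ggx0: "gg (Phi x0) = x0" using ggPhi \<open>x0 \<in> U'\<close> by simp
  define e :: "(real^'n) \<times> real" where "e = (0, 1)"
  define cc where "cc = (\<lambda>s::real. Phi x0 + s *\<^sub>R e)"
  define gam where "gam = (\<lambda>s. gg (cc s))"
  define A where "A = (\<lambda>s. Blinfun (fd (gam s)))"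
  define A0 where "A0 = Blinfun (fd x0)"
  define K where "K = norm invf + 1"
  have Kpos: "K > 0" unfolding K_def by (simp add: add_nonneg_pos)
  have A0ap: "blinfun_apply A0 z = fd x0 z" for z by (simp add: A0_def bounded_linear_Blinfun_apply[OF bl])
  have Aap: "blinfun_apply (A s) z = fd (gam s) z" for s z by (simp add: A_def bounded_linear_Blinfun_apply[OF bl])
  have bound0: "norm z \<le> K * norm (fd x0 z)" for z
  proof -
    have "norm z = norm (blinfun_apply invf (fd x0 z))" by (simp add: invf_ap)
    also have "\<dots> \<le> norm invf * norm (fd x0 z)" by (rule norm_blinfun)
    also have "\<dots> \<le> K * norm (fd x0 z)" unfolding K_def by (simp add: algebra_simps)
    finally show ?thesis .
  qed
  have Phix0: "Phi x0 = (0, phi \<bullet> u)" by (simp add: Phi_def x0_def TL)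
  have cc0: "cc 0 = Phi x0" by (simp add: cc_def)
  have gam0: "gam 0 = x0" by (simp add: gam_def cc0 ggx0)
  have A0': "A 0 = A0" by (simp add: A_def A0_def gam0)
  have icc: "isCont cc s" for s unfolding cc_def by (intro continuous_intros)
  have igg: "isCont gg y" if "y \<in> V" for y using cgg that unfolding continuous_on_eq_continuous_at[OF oV] by blast
  have igam: "isCont gam s" if "cc s \<in> V" for s unfolding gam_def by (rule isCont_o2[OF icc igg[OF that]])
  have ifd: "isCont (\<lambda>x. Blinfun (fd x)) x" for x using cfd unfolding continuous_on_eq_continuous_at[OF open_UNIV] by blast
  have iA: "isCont A s" if "cc s \<in> V" for s unfolding A_def by (rule isCont_o2[OF igam[OF that] ifd])
  have ccV0: "cc 0 \<in> V" using cc0 PV by simp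
  have E1: "eventually (\<lambda>s. cc s \<in> V) (nhds 0)"
  proof -
    have "(cc \<longlongrightarrow> cc 0) (at 0)" using icc[of 0] unfolding isCont_def .
    then have "eventually (\<lambda>s. cc s \<in> V) (at 0)" by (rule topological_tendstoD[OF _ oV ccV0])
    then show ?thesis using ccV0 by (simp add: eventually_nhds_conv_at)
  qed
  have E2: "eventually (\<lambda>s. gam s \<in> S \<times> UNIV) (nhds 0)"
  proof -
    have "(gam \<longlongrightarrow> gam 0) (at 0)" using igam[OF ccV0] unfolding isCont_def .
    moreover have "open (S \<times> (UNIV::real set))" using S by (simp add: open_Times)
    moreover have "gam 0 \<in> S \<times> UNIV" using gam0 uS x0_def by simp
    ultimately have "eventually (\<lambda>s. gam s \<in> S \<times> UNIV) (at 0)" by (rule topological_tendstoD)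
    then show ?thesis using \<open>gam 0 \<in> S \<times> UNIV\<close> by (simp add: eventually_nhds_conv_at)
  qed
  have E3: "eventually (\<lambda>s. dist (A s) A0 < 1 / (2 * K)) (nhds 0)"
  proof -
    have "(A \<longlongrightarrow> A0) (at 0)" using iA[OF ccV0] unfolding isCont_def A0' .
    then have "eventually (\<lambda>s. dist (A s) A0 < 1 / (2 * K)) (at 0)" by (rule tendstoD) (use Kpos in simp)
    then show ?thesis using A0' Kpos by (simp add: eventually_nhds_conv_at)
  qed
  obtain a where a: "a > 0" and aP: "\<And>s. dist s 0 < a \<Longrightarrow> cc s \<in> V \<and> gam s \<in> S \<times> UNIV \<and> dist (A s) A0 < 1 / (2 * K)"
    using eventually_conj[OF E1 eventually_conj[OF E2 E3]] unfolding eventually_nhds_metric by blast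
  define I where "I = {-a<..<a}"
  have Iiff: "s \<in> I \<longleftrightarrow> dist s 0 < a" for s by (auto simp: I_def dist_real_def)
  have ccV: "cc s \<in> V" if "s \<in> I" for s using aP that Iiff by blast
  have gS: "fst (gam s) \<in> S" if "s \<in> I" for s using aP that Iiff by (auto simp: mem_Times_iff)
  have Aclose: "dist (A s) A0 < 1 / (2 * K)" if "s \<in> I" for s using aP that Iiff by blast
  have oI: "open I" by (simp add: I_def)
  have I0: "0 \<in> I" using a by (simp add: I_def)
  define w where "w = (\<lambda>s. g' (cc s) e)"
  have hv: "(gam has_vector_derivative w s) (at s)" if "s \<in> I" for s
  proof -
    have dcc: "(cc has_derivative (\<lambda>t. t *\<^sub>R e)) (at s)" unfolding cc_def by (auto intro!: derivative_eq_intros)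
    have dg: "(gg has_derivative g' (cc s)) (at (cc s))" by (rule dgg[OF ccV[OF that]])
    have lg: "linear (g' (cc s))" using dg has_derivative_linear by blast
    have "(gam has_derivative (\<lambda>t. g' (cc s) (t *\<^sub>R e))) (at s)"
      unfolding gam_def using has_derivative_compose[OF dcc dg] by (simp add: o_def)
    moreover have "(\<lambda>t. g' (cc s) (t *\<^sub>R e)) = (\<lambda>t. t *\<^sub>R w s)"
      using linear_scale[OF lg] by (auto simp: w_def)
    ultimately show ?thesis unfolding has_vector_derivative_def by simp
  qed
  have Aw: "fd (gam s) (w s) = e" if "s \<in> I" for s
  proof -
    have eq: "blinfun_apply (Blinfun (fd (gg (cc s)))) = fd (gam s)"
      by (simp add: gam_def bounded_linear_Blinfun_apply[OF bl])
    have "g' (cc s) = inv (fd (gam s))" using g'eq[OF ccV[OF that]] eq by simp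
    moreover have "bij (fd (gam s))" using bij[OF ccV[OF that]] eq by simp
    ultimately show ?thesis unfolding w_def by (simp add: bij_is_surj surj_f_inv_f)
  qed
  have lbound: "norm z \<le> 2 * K * norm (fd (gam s) z)" if "s \<in> I" for s z
  proof -
    have eq: "fd x0 z = fd (gam s) z + blinfun_apply (A0 - A s) z" by (simp add: blinfun.diff_left A0ap Aap)
    have t1: "norm (fd x0 z) \<le> norm (fd (gam s) z) + norm (blinfun_apply (A0 - A s) z)"
      unfolding eq by (rule norm_triangle_ineq)
    have t2: "norm (blinfun_apply (A0 - A s) z) \<le> norm (A0 - A s) * norm z" by (rule norm_blinfun)
    have n1: "norm (A0 - A s) \<le> 1 / (2 * K)"
      using Aclose[OF that] by (simp add: dist_norm norm_minus_commute)
    have t3: "norm (A0 - A s) * norm z \<le> 1 / (2 * K) * norm z" by (rule mult_right_mono[OF n1 norm_ge_zero])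
    have t4: "norm (fd x0 z) \<le> norm (fd (gam s) z) + 1 / (2 * K) * norm z" using t1 t2 t3 by linarith
    have "K * norm (fd x0 z) \<le> K * (norm (fd (gam s) z) + 1 / (2 * K) * norm z)"
      by (rule mult_left_mono[OF t4]) (use Kpos in simp)
    also have "\<dots> = K * norm (fd (gam s) z) + norm z / 2" using Kpos by (simp add: field_simps)
    finally have "K * norm (fd x0 z) \<le> K * norm (fd (gam s) z) + norm z / 2" .
    with bound0[of z] show ?thesis by linarith
  qed
  have cw: "continuous_on I w"
    unfolding continuous_on_eq_continuous_at[OF oI]
  proof
    fix s0 assume s0: "s0 \<in> I"
    have evI: "eventually (\<lambda>s. s \<in> I) (at s0)"
      using eventually_nhds_in_open[OF oI s0] by (simp add: eventually_nhds_conv_at)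
    have "eventually (\<lambda>s. norm (w s - w s0) \<le> 2 * K * (norm (A s0 - A s) * norm (w s0))) (at s0)"
      using evI
    proof (rule eventually_mono)
      fix s assume s: "s \<in> I"
      have lin: "linear (fd (gam s))" using bl bounded_linear.linear by blast
      have "fd (gam s) (w s - w s0) = fd (gam s0) (w s0) - fd (gam s) (w s0)"
        using Aw[OF s] Aw[OF s0] linear_diff[OF lin] by simp
      also have "\<dots> = blinfun_apply (A s0 - A s) (w s0)" by (simp add: blinfun.diff_left Aap)
      finally have eqv: "fd (gam s) (w s - w s0) = blinfun_apply (A s0 - A s) (w s0)" .
      have "norm (fd (gam s) (w s - w s0)) \<le> norm (A s0 - A s) * norm (w s0)"
        unfolding eqv by (rule norm_blinfun)
      then have "2 * K * norm (fd (gam s) (w s - w s0)) \<le> 2 * K * (norm (A s0 - A s) * norm (w s0))"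
        by (rule mult_left_mono) (use Kpos in simp)
      then show "norm (w s - w s0) \<le> 2 * K * (norm (A s0 - A s) * norm (w s0))"
        using lbound[OF s, of "w s - w s0"] by linarith
    qed
    moreover have "((\<lambda>s. 2 * K * (norm (A s0 - A s) * norm (w s0))) \<longlongrightarrow> 0) (at s0)"
    proof -
      have "(A \<longlongrightarrow> A s0) (at s0)" using iA[OF ccV[OF s0]] unfolding isCont_def .
      then have "((\<lambda>s. 2 * K * (norm (A s0 - A s) * norm (w s0))) \<longlongrightarrow> 2 * K * (norm (A s0 - A s0) * norm (w s0))) (at s0)"
        by (intro tendsto_intros)
      then show ?thesis by simp
    qed
    ultimately have "((\<lambda>s. w s - w s0) \<longlongrightarrow> 0) (at s0)" by (rule Lim_null_comparison)
    then show "isCont w s0" unfolding isCont_def by (rule LIM_zero_cancel)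
  qed
  have C1: "gam C1_differentiable_on I"
    unfolding C1_differentiable_on_def using hv cw by blast
  have snd0: "snd (w 0) = 0"
  proof -
    have "fd x0 (w 0) = e" using Aw[OF I0] gam0 by simp
    then have "M *v fst (w 0) - snd (w 0) *\<^sub>R G u = 0" using fdx0[of "w 0"] by (simp add: e_def)
    then show ?thesis by (rule kzero)
  qed
  have dl: "((\<lambda>s. snd (gam s)) has_real_derivative 0) (at 0)"
  proof -
    have "(gam has_derivative (\<lambda>t. t *\<^sub>R w 0)) (at 0)" using hv[OF I0] unfolding has_vector_derivative_def .
    then have "((\<lambda>s. snd (gam s)) has_derivative (\<lambda>t. snd (t *\<^sub>R w 0))) (at 0)" by (rule has_derivative_snd)
    moreover have "(\<lambda>t. snd (t *\<^sub>R w 0)) = (*) 0" using snd0 by auto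
    ultimately show ?thesis unfolding has_field_derivative_def by simp
  qed
  have Fz: "Fmap T G (fst (gam s)) (snd (gam s)) = 0" if "s \<in> I" for s
  proof -
    have "Phi (gam s) = cc s" unfolding gam_def by (rule Phigg[OF ccV[OF that]])
    then have "fst (Phi (gam s)) = 0" by (simp add: cc_def Phix0 e_def)
    then show ?thesis by (simp add: Phi_def Fmap_def)
  qed
  have lle: "snd (gam s) \<le> L" if "s \<in> I" for s
  proof (rule bnd[OF gS[OF that]])
    show "T (fst (gam s)) = snd (gam s) *\<^sub>R G (fst (gam s))" using Fz[OF that] by (simp add: Fmap_def)
  qed
  show ?thesis
    unfolding turning_point_def
  proof (intro exI[of _ a] conjI exI[of _ "\<lambda>s. fst (gam s)"] exI[of _ "\<lambda>s. snd (gam s)"])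
    show "0 < a" by (rule a)
    show "(\<lambda>s. (fst (gam s), snd (gam s))) C1_differentiable_on {- a<..<a}" using C1 by (simp add: I_def)
    show "\<forall>s\<in>{- a<..<a}. Fmap T G (fst (gam s)) (snd (gam s)) = 0" using Fz by (simp add: I_def)
    show "fst (gam 0) = u" "snd (gam 0) = L" by (simp_all add: gam0 x0_def)
    show "((\<lambda>s. snd (gam s)) has_real_derivative 0) (at 0)" by (rule dl)
    show "(\<forall>s\<in>{- a<..<a}. snd (gam s) \<le> L) \<or> (\<forall>s\<in>{- a<..<a}. L \<le> snd (gam s))"
      using lle by (simp add: I_def)
  qed
qed


lemma bnd_lemma:
  fixes T G :: "real^'n \<Rightarrow> real^'n"
  assumes pos: "\<forall>v\<in>S. \<forall>p\<in>Sigma_cone. G v \<bullet> p > 0"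
    and LS: "ereal L = lambda_star T G S"
    and vS: "v \<in> S" and Tv: "T v = l *\<^sub>R G v"
  shows "l \<le> L"
proof -
  have eqs: "Lam T G v p = l" if "p \<in> Sigma_cone" for p
  proof -
    have "G v \<bullet> p > 0" using pos vS that by blast
    then show ?thesis by (simp add: Lam_def Tv)
  qed
  have "(INF p\<in>Sigma_cone. ereal (Lam T G v p)) = (INF p\<in>(Sigma_cone::(real^'n) set). ereal l)"
    using eqs by (simp cong: INF_cong_simp)
  also have "\<dots> = ereal l"
  proof (rule INF_const)
    have "(1::real^'n) \<in> Sigma_cone" by (simp add: Sigma_cone_def vec_eq_iff)
    then show "(Sigma_cone::(real^'n) set) \<noteq> {}" by blast
  qed
  finally have "ereal l = (INF p\<in>Sigma_cone. ereal (Lam T G v p))" by simp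
  also have "\<dots> \<le> lambda_star T G S" unfolding lambda_star_def by (rule SUP_upper[OF vS])
  finally show ?thesis using LS[symmetric] by simp
qed

theorem theorem1:
  fixes T G :: "real^'n \<Rightarrow> real^'n" and S :: "(real^'n) set" and u psi :: "real^'n"
  assumes "C1_map T" and "C1_map G"
    and "open S"
    and "\<forall>v\<in>S. \<forall>p\<in>Sigma_cone. G v \<bullet> p > 0"
    and "lambda_star T G S < \<infinity>"
    and "simple_solution T G S u psi"
  shows "maximal_turning_point T G S u (real_of_ereal (lambda_star T G S)) \<and>
         {p. transpose (jacobian (\<lambda>v. Fmap T G v (real_of_ereal (lambda_star T G S))) (at u)) *v p = 0}
           = span {psi}"
proof -
  note T = assms(1) and G = assms(2) and pos = assms(4)
  have uS: "u \<in> S" and psiS: "psi \<in> Sigma_cone"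
    and dpsi: "((\<lambda>p. Lam T G u p) has_derivative (\<lambda>h. 0)) (at psi)"
    and du: "((\<lambda>v. Lam T G v psi) has_derivative (\<lambda>h. 0)) (at u)"
    and LS: "ereal (Lam T G u psi) = lambda_star T G S"
    and dimD: "dim {x. D_upsi_Lam T G u psi *v x = 0} = 1"
    using assms(6) unfolding simple_solution_def maximin_solution_def stationary_point_def by auto
  define L where "L = Lam T G u psi"
  have rL: "real_of_ereal (lambda_star T G S) = L" using LS L_def by (metis real_of_ereal.simps(1))
  have LS': "ereal L = lambda_star T G S" using LS L_def by simp
  have g: "G u \<bullet> psi > 0" using pos uS psiS by blast
  have psi0: "psi \<noteq> 0" using psiS by (simp add: Sigma_cone_def)
  have TL: "T u = L *\<^sub>R G u" unfolding L_def by (rule stat_psi[OF dpsi g])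
  define M where "M = jacobian T (at u) - L *\<^sub>R jacobian G (at u)"
  have K: "(M *v h) \<bullet> psi = 0" for h unfolding M_def L_def by (rule stat_u[OF T G du g])
  have Kt: "transpose M *v psi = 0"
  proof -
    have "(M *v (transpose M *v psi)) \<bullet> psi = 0" by (rule K)
    then have "(transpose M *v psi) \<bullet> (transpose M *v psi) = 0" using inner_mv[of M "transpose M *v psi" psi] by simp
    then show ?thesis by simp
  qed
  have D: "D_upsi_Lam T G u psi = (1 / (G u \<bullet> psi)) *\<^sub>R M"
    unfolding M_def by (rule mixed[OF T G g TL]) (use K M_def in simp)
  have kerD: "{x. D_upsi_Lam T G u psi *v x = 0} = {x. M *v x = 0}"
    using g by (simp add: D scaleR_matrix_vector_assoc[symmetric])
  have kd: "dim {x. M *v x = 0} = 1" using dimD kerD by simp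
  have Mv: "jacobian T (at u) *v h - L *\<^sub>R (jacobian G (at u) *v h) = M *v h" for h
    by (simp add: M_def matrix_vector_mult_diff_rdistrib scaleR_matrix_vector_assoc)
  have dF: "((\<lambda>v. Fmap T G v L) has_derivative (\<lambda>h. M *v h)) (at u)"
  proof -
    have "((\<lambda>v. T v - L *\<^sub>R G v) has_derivative (\<lambda>h. jacobian T (at u) *v h - L *\<^sub>R (jacobian G (at u) *v h))) (at u)"
      by (intro derivative_intros C1_deriv T G)
    then show ?thesis unfolding Fmap_def Mv .
  qed
  have jac: "jacobian (\<lambda>v. Fmap T G v L) (at u) = M"
    unfolding jacobian_def frechet_derivative_at[OF dF, symmetric] by simp
  have part2: "{p. transpose M *v p = 0} = span {psi}"
    by (rule ker_transpose[OF kd Kt psi0])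
  have bnd: "\<And>v l. v \<in> S \<Longrightarrow> T v = l *\<^sub>R G v \<Longrightarrow> l \<le> L"
    using bnd_lemma[OF pos LS'] by blast
  have tp: "turning_point T G u L"
    by (rule turning[OF T G assms(3) uS bnd g TL]) (use Kt kd M_def in simp_all)
  have maxi: "lam0 \<le> L" if tp0: "turning_point T G u0 lam0" and u0S: "u0 \<in> S" for u0 lam0
  proof -
    have "Fmap T G u0 lam0 = 0"
      using tp0 unfolding turning_point_def by (elim exE conjE) (auto dest: bspec[where x=0])
    then have "T u0 = lam0 *\<^sub>R G u0" by (simp add: Fmap_def)
    then show ?thesis by (rule bnd[OF u0S])
  qed
  show ?thesis
    unfolding rL jac part2
    using tp uS maxi by (auto simp: maximal_turning_point_def)
qed

end
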